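(* Let $\mu$ be a growth rate and let $V$ be a Lyapunov function for $x'=A(t)x$ such that $|V(\tau,x)|\le C\mu(\tau)^{\mathrm{sign}(\tau)\epsilon}\|x\|$ for all $(\tau,x)$, for some $C>0,\epsilon\ge0$. Let $\mathcal{G}^s_\tau\subset\mathcal{E}^s_\tau$ and $\mathcal{G}^u_\tau\subset\mathcal{E}^u_\tau$ ($\tau\in\mathbb{R}$) be subspaces with $\Psi(t,\tau)\mathcal{G}^s_\tau=\mathcal{G}^s_t$ and $\Psi(t,\tau)\mathcal{G}^u_\tau=\mathcal{G}^u_t$ for all $t,\tau$. Suppose there are $\alpha<0$, $\beta<0$ such that for each $\tau$: (1) for $x\in\mathcal{G}^u_\tau$ and $t\ge\tau$, $V(t,\Psi(t,\tau)x)\ge(\mu(\tau)/\mu(t))^\alpha V(\tau,x)$; (2) for $x\in\mathcal{G}^s_\tau$ and $t\ge\tau$, $|V(t,\Psi(t,\tau)x)|\le(\mu(t)/\mu(\tau))^\beta|V(\tau,x)|$; (3) for $x\in\mathcal{G}^s_\tau\cup\mathcal{G}^u_\tau$, $|V(\tau,x)|\ge\mu(\tau)^{-\mathrm{sign}(\tau)\epsilon}\|x\|/C$. Then for all $t\ge\tau$, $$\|\Psi(t,\tau)|_{\mathcal{G}^s_\tau}\|\le C^2\Big(\frac{\mu(t)}{\mu(\tau)}\Big)^{\beta+\mathrm{sign}(t)\epsilon}\mu(\tau)^{2\mathrm{sign}(\tau)\epsilon},\qquad \|\Psi(t,\tau)^{-1}|_{\mathcal{G}^u_t}\|\le C^2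\Big(\frac{\mu(\tau)}{\mu(t)}\Big)^{-\alpha+\mathrm{sign}(\tau)\epsilon}\mu(t)^{2\mathrm{sign}(t)\epsilon}.$$
   Context: Growth rate: strictly increasing $\mu:\mathbb{R}\to(0,\infty)$, $\mu(0)=1$, $\mu\to\infty$ at $+\infty$, $\mu\to0$ at $-\infty$. $A(t)\in GL(n,\mathbb{R})$ locally integrable, evolution operator $\Psi(t,s)$. Cones $\mathcal{C}^u(W)=\{0\}\cup W^{-1}(0,\infty)$, $\mathcal{C}^s(W)=\{0\}\cup W^{-1}(-\infty,0)$. A continuous $V:\mathbb{R}\times\mathbb{R}^n\to\mathbb{R}$, $V_t=V(t,\cdot)$, is a Lyapunov function if there are $d_s+d_u=n$ with $d_u,d_s$ the maximal dimensions of linear subspaces inside $\mathcal{C}^u(V_\tau),\mathcal{C}^s(V_\tau)$ for each $\tau$, and $V(t,\Psi(t,\tau)x)\ge V(\tau,x)$ for all $t\ge\tau$, $x$. $\mathcal{E}^u_\tau=\bigcap_{t}\Psi(\tau,t)\overline{\mathcal{C}^u(V_t)}$, $\mathcal{E}^s_\tau=\bigcap_t\Psi(\tau,t)\overline{\mathcal{C}^s(V_t)}$. *)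

theory Defs
  imports "HOL-Analysis.Analysis"
begin

definition growth_rate :: "(real \<Rightarrow> real) \<Rightarrow> bool" where
  "growth_rate \<mu> \<longleftrightarrow> strict_mono \<mu> \<and> (\<forall>t. \<mu> t > 0) \<and> \<mu> 0 = 1 \<and>
     filterlim \<mu> at_top at_top \<and> (\<mu> \<longlongrightarrow> 0) at_bot"

definition admissible_coeff :: "(real \<Rightarrow> real^'n^'n) \<Rightarrow> bool" where
  "admissible_coeff A \<longleftrightarrow> (\<forall>t. invertible (A t)) \<and>
     (\<forall>a b. A absolutely_integrable_on {a..b})"

text \<open>Fundamental matrix solution (Caratheodory sense, integral form) of x' = A(t) x:
  a matrix solution whose values are invertible.\<close>
definition fundamental_matrix :: "(real \<Rightarrow> real^'n^'n) \<Rightarrow> (real \<Rightarrow> real^'n^'n) \<Rightarrow> bool" where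
  "fundamental_matrix A \<Phi> \<longleftrightarrow> continuous_on UNIV \<Phi> \<and> (\<forall>t. invertible (\<Phi> t)) \<and>
     (\<forall>s t. s \<le> t \<longrightarrow> ((\<lambda>r. A r ** \<Phi> r) has_integral (\<Phi> t - \<Phi> s)) {s..t})"

definition evolution_operator ::
  "(real \<Rightarrow> real^'n^'n) \<Rightarrow> (real \<Rightarrow> real \<Rightarrow> real^'n^'n) \<Rightarrow> bool" where
  "evolution_operator A \<Psi> \<longleftrightarrow>
     (\<exists>\<Phi>. fundamental_matrix A \<Phi> \<and> (\<forall>t s. \<Psi> t s = \<Phi> t ** matrix_inv (\<Phi> s)))"

definition cone_u :: "(real^'n \<Rightarrow> real) \<Rightarrow> (real^'n) set" where
  "cone_u W = {0} \<union> {x. W x > 0}"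

definition cone_s :: "(real^'n \<Rightarrow> real) \<Rightarrow> (real^'n) set" where
  "cone_s W = {0} \<union> {x. W x < 0}"

definition max_subspace_dim :: "(real^'n) set \<Rightarrow> nat \<Rightarrow> bool" where
  "max_subspace_dim S d \<longleftrightarrow>
     (\<exists>L. subspace L \<and> L \<subseteq> S \<and> dim L = d) \<and>
     (\<forall>L. subspace L \<and> L \<subseteq> S \<longrightarrow> dim L \<le> d)"

definition lyapunov_function ::
  "(real \<Rightarrow> real \<Rightarrow> real^'n^'n) \<Rightarrow> (real \<Rightarrow> real^'n \<Rightarrow> real) \<Rightarrow> bool" where
  "lyapunov_function \<Psi> V \<longleftrightarrow>
     continuous_on UNIV (\<lambda>p. V (fst p) (snd p)) \<and>
     (\<exists>ds du. ds + du = CARD('n) \<and>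
        (\<forall>\<tau>. max_subspace_dim (cone_u (V \<tau>)) du \<and> max_subspace_dim (cone_s (V \<tau>)) ds)) \<and>
     (\<forall>t \<tau> x. \<tau> \<le> t \<longrightarrow> V t (\<Psi> t \<tau> *v x) \<ge> V \<tau> x)"

definition E_u :: "(real \<Rightarrow> real \<Rightarrow> real^'n^'n) \<Rightarrow> (real \<Rightarrow> real^'n \<Rightarrow> real) \<Rightarrow> real \<Rightarrow> (real^'n) set" where
  "E_u \<Psi> V \<tau> = (\<Inter>t. (\<lambda>x. \<Psi> \<tau> t *v x) ` closure (cone_u (V t)))"

definition E_s :: "(real \<Rightarrow> real \<Rightarrow> real^'n^'n) \<Rightarrow> (real \<Rightarrow> real^'n \<Rightarrow> real) \<Rightarrow> real \<Rightarrow> (real^'n) set" where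
  "E_s \<Psi> V \<tau> = (\<Inter>t. (\<lambda>x. \<Psi> \<tau> t *v x) ` closure (cone_s (V t)))"

definition restr_norm :: "real^'n^'n \<Rightarrow> (real^'n) set \<Rightarrow> real" where
  "restr_norm M G = Sup {norm (M *v x) | x. x \<in> G \<and> norm x \<le> 1}"

end

theory Submission
  imports Defs
begin


lemma minv_props:
  fixes M :: "real^'n^'n"
  assumes "invertible M"
  shows "M ** matrix_inv M = mat 1 \<and> matrix_inv M ** M = mat 1"
  using assms unfolding invertible_def matrix_inv_def by (rule someI_ex)

lemma minv_invertible:
  fixes M :: "real^'n^'n"
  assumes "invertible M"
  shows "invertible (matrix_inv M)"
  using minv_props[OF assms] unfolding invertible_def by blast

lemma mu_facts:
  assumes "growth_rate \<mu>"
  shows "\<And>t. \<mu> t > 0" "\<And>t. t > 0 \<Longrightarrow> \<mu> t > 1" "\<And>t. t < 0 \<Longrightarrow> \<mu> t < 1" "\<mu> 0 = 1"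
proof -
  have sm: "strict_mono \<mu>" and p: "\<And>t. \<mu> t > 0" and z: "\<mu> 0 = 1"
    using assms unfolding growth_rate_def by auto
  show "\<And>t. \<mu> t > 0" by (rule p)
  show "\<mu> 0 = 1" by (rule z)
  show "\<And>t. t > 0 \<Longrightarrow> \<mu> t > 1" using sm z by (metis strict_monoD)
  show "\<And>t. t < 0 \<Longrightarrow> \<mu> t < 1" using sm z by (metis strict_monoD)
qed

lemma sgn_pow_ge1:
  assumes "growth_rate \<mu>" and "\<epsilon> \<ge> 0" and "(s::real) \<le> r"
  shows "1 \<le> \<mu> s powr ((sgn s - sgn r) * \<epsilon>)" "1 \<le> \<mu> r powr ((sgn r - sgn s) * \<epsilon>)"
proof -
  note mf = mu_facts[OF assms(1)]
  show "1 \<le> \<mu> s powr ((sgn s - sgn r) * \<epsilon>)"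
  proof (cases "s < 0")
    case True
    have e: "(sgn s - sgn r) * \<epsilon> \<le> 0" using True assms(2)
      by (auto simp: sgn_real_def mult_nonpos_nonneg)
    have "\<mu> s powr 0 \<le> \<mu> s powr ((sgn s - sgn r) * \<epsilon>)"
      using powr_mono'[OF e, of "\<mu> s"] mf(1)[of s] mf(3)[OF True] by auto
    then show ?thesis using mf(1)[of s] by simp
  next
    case False
    then show ?thesis using assms(3) mf(1)[of s] mf(1)[of r] mf(4) by (cases "s = 0") (auto simp: sgn_real_def)
  qed
  show "1 \<le> \<mu> r powr ((sgn r - sgn s) * \<epsilon>)"
  proof (cases "r > 0")
    case True
    have e: "(sgn r - sgn s) * \<epsilon> \<ge> 0" using True assms(2)
      by (auto simp: sgn_real_def)
    show ?thesis using ge_one_powr_ge_zero[OF _ e] mf(2)[OF True] by auto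
  next
    case False
    then show ?thesis using assms(3) mf(1)[of s] mf(1)[of r] mf(4) by (cases "r = 0") (auto simp: sgn_real_def)
  qed
qed

lemma le_mult_one_aux: "0 \<le> (X::real) \<Longrightarrow> 1 \<le> p \<Longrightarrow> X \<le> X * p"
  by (metis mult_left_mono mult.right_neutral)

lemma restr_norm_le:
  fixes M :: "real^'n^'n"
  assumes "subspace G" and "K \<ge> 0" and "\<And>x. x \<in> G \<Longrightarrow> norm (M *v x) \<le> K * norm x"
  shows "restr_norm M G \<le> K"
  unfolding restr_norm_def
proof (rule cSup_least)
  show "{norm (M *v x) |x. x \<in> G \<and> norm x \<le> 1} \<noteq> {}"
    using subspace_0[OF assms(1)] by force
next
  fix y assume "y \<in> {norm (M *v x) |x. x \<in> G \<and> norm x \<le> 1}"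
  then obtain x where x: "x \<in> G" "norm x \<le> 1" "y = norm (M *v x)" by auto
  have "y \<le> K * norm x" using assms(3)[OF x(1)] x(3) by simp
  also have "\<dots> \<le> K" using x(2) assms(2) by (simp add: mult_left_le)
  finally show "y \<le> K" .
qed

theorem mainTheorem9:
  fixes \<mu> :: "real \<Rightarrow> real"
    and A :: "real \<Rightarrow> real^'n^'n"
    and \<Psi> :: "real \<Rightarrow> real \<Rightarrow> real^'n^'n"
    and V :: "real \<Rightarrow> real^'n \<Rightarrow> real"
    and Gs Gu :: "real \<Rightarrow> (real^'n) set"
    and C \<epsilon> \<alpha> \<beta> :: real
  assumes growth: "growth_rate \<mu>"
    and coeff: "admissible_coeff A"
    and evol: "evolution_operator A \<Psi>"
    and lyap: "lyapunov_function \<Psi> V"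
    and C_pos: "C > 0" and eps_nonneg: "\<epsilon> \<ge> 0"
    and V_bound: "\<And>\<tau> x. \<bar>V \<tau> x\<bar> \<le> C * \<mu> \<tau> powr (sgn \<tau> * \<epsilon>) * norm x"
    and Gs_sub: "\<And>\<tau>. subspace (Gs \<tau>)" and Gu_sub: "\<And>\<tau>. subspace (Gu \<tau>)"
    and Gs_E: "\<And>\<tau>. Gs \<tau> \<subseteq> E_s \<Psi> V \<tau>" and Gu_E: "\<And>\<tau>. Gu \<tau> \<subseteq> E_u \<Psi> V \<tau>"
    and Gs_inv: "\<And>t \<tau>. (\<lambda>x. \<Psi> t \<tau> *v x) ` Gs \<tau> = Gs t"
    and Gu_inv: "\<And>t \<tau>. (\<lambda>x. \<Psi> t \<tau> *v x) ` Gu \<tau> = Gu t"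
    and \<alpha>_neg: "\<alpha> < 0" and \<beta>_neg: "\<beta> < 0"
    and cond1: "\<And>\<tau> t x. x \<in> Gu \<tau> \<Longrightarrow> \<tau> \<le> t \<Longrightarrow>
                  V t (\<Psi> t \<tau> *v x) \<ge> (\<mu> \<tau> / \<mu> t) powr \<alpha> * V \<tau> x"
    and cond2: "\<And>\<tau> t x. x \<in> Gs \<tau> \<Longrightarrow> \<tau> \<le> t \<Longrightarrow>
                  \<bar>V t (\<Psi> t \<tau> *v x)\<bar> \<le> (\<mu> t / \<mu> \<tau>) powr \<beta> * \<bar>V \<tau> x\<bar>"
    and cond3: "\<And>\<tau> x. x \<in> Gs \<tau> \<union> Gu \<tau> \<Longrightarrow>
                  \<bar>V \<tau> x\<bar> \<ge> \<mu> \<tau> powr (- sgn \<tau> * \<epsilon>) * norm x / C"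
  shows "\<forall>t \<tau>. \<tau> \<le> t \<longrightarrow>
           restr_norm (\<Psi> t \<tau>) (Gs \<tau>)
             \<le> C\<^sup>2 * (\<mu> t / \<mu> \<tau>) powr (\<beta> + sgn t * \<epsilon>) * \<mu> \<tau> powr (2 * sgn \<tau> * \<epsilon>)
         \<and> restr_norm (matrix_inv (\<Psi> t \<tau>)) (Gu t)
             \<le> C\<^sup>2 * (\<mu> \<tau> / \<mu> t) powr (- \<alpha> + sgn \<tau> * \<epsilon>) * \<mu> t powr (2 * sgn t * \<epsilon>)"
  proof (intro allI impI conjI)
  fix t \<tau> :: real
  assume tt: "\<tau> \<le> t"
  note mf = mu_facts[OF growth]
  obtain \<Phi> where fm: "fundamental_matrix A \<Phi>" and Pd: "\<And>t s. \<Psi> t s = \<Phi> t ** matrix_inv (\<Phi> s)"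
    using evol unfolding evolution_operator_def by blast
  have Phinv: "\<And>t. invertible (\<Phi> t)" using fm unfolding fundamental_matrix_def by blast
  have Psinv: "\<And>t s. invertible (\<Psi> t s)"
    unfolding Pd by (intro invertible_mult Phinv minv_invertible)
  have Pid: "\<And>s. \<Psi> s s = mat 1" unfolding Pd using minv_props[OF Phinv] by blast
  define a where "a = \<mu> t"
  define b where "b = \<mu> \<tau>"
  have a0: "a > 0" and b0: "b > 0" unfolding a_def b_def using mf by auto
  have inv3: "\<And>s y. y \<in> Gs s \<union> Gu s \<Longrightarrow> norm y \<le> C * \<mu> s powr (sgn s * \<epsilon>) * \<bar>V s y\<bar>"
  proof -
    fix s y assume "y \<in> Gs s \<union> Gu s"
    from cond3[OF this] have h: "\<mu> s powr (- sgn s * \<epsilon>) * norm y / C \<le> \<bar>V s y\<bar>" .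
    have m: "\<mu> s powr (- sgn s * \<epsilon>) = inverse (\<mu> s powr (sgn s * \<epsilon>))"
      using powr_minus[of "\<mu> s" "sgn s * \<epsilon>"] by simp
    have pp: "\<mu> s powr (sgn s * \<epsilon>) > 0" using mf(1)[of s] by simp
    from h show "norm y \<le> C * \<mu> s powr (sgn s * \<epsilon>) * \<bar>V s y\<bar>"
      unfolding m using pp C_pos by (simp add: field_simps)
  qed
  let ?Ks = "C\<^sup>2 * (\<mu> t / \<mu> \<tau>) powr (\<beta> + sgn t * \<epsilon>) * \<mu> \<tau> powr (2 * sgn \<tau> * \<epsilon>)"
  show "restr_norm (\<Psi> t \<tau>) (Gs \<tau>) \<le> ?Ks"
  proof (rule restr_norm_le[OF Gs_sub])
    show "0 \<le> ?Ks" by simp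
    fix x assume x: "x \<in> Gs \<tau>"
    have y: "\<Psi> t \<tau> *v x \<in> Gs t" using Gs_inv[of t \<tau>] x by blast
    have "norm (\<Psi> t \<tau> *v x) \<le> C * a powr (sgn t * \<epsilon>) * \<bar>V t (\<Psi> t \<tau> *v x)\<bar>"
      using inv3[of "\<Psi> t \<tau> *v x" t] y unfolding a_def by blast
    also have "\<dots> \<le> C * a powr (sgn t * \<epsilon>) * ((a / b) powr \<beta> * \<bar>V \<tau> x\<bar>)"
      using cond2[OF x tt] C_pos unfolding a_def b_def by (intro mult_left_mono) auto
    also have "\<dots> \<le> C * a powr (sgn t * \<epsilon>) * ((a / b) powr \<beta> * (C * b powr (sgn \<tau> * \<epsilon>) * norm x))"
      using V_bound[of \<tau> x] C_pos unfolding b_def by (intro mult_left_mono) auto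
    also have "\<dots> = (C\<^sup>2 * (a / b) powr \<beta> * a powr (sgn t * \<epsilon>) * b powr (sgn \<tau> * \<epsilon>)) * norm x"
      by (simp add: power2_eq_square algebra_simps)
    also have "\<dots> \<le> (C\<^sup>2 * (a / b) powr \<beta> * a powr (sgn t * \<epsilon>) * b powr (sgn \<tau> * \<epsilon>)
                     * b powr ((sgn \<tau> - sgn t) * \<epsilon>)) * norm x"
      using sgn_pow_ge1(1)[OF growth eps_nonneg tt] a0 b0 unfolding b_def[symmetric]
      by (intro mult_right_mono) (auto intro!: le_mult_one_aux)
    also have "\<dots> = ?Ks * norm x"
    proof -
      have "(a / b) powr (\<beta> + sgn t * \<epsilon>) = (a / b) powr \<beta> * a powr (sgn t * \<epsilon>) / b powr (sgn t * \<epsilon>)"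
        unfolding powr_add powr_divide using a0 b0 by simp
      moreover have "b powr (2 * sgn \<tau> * \<epsilon>) = b powr (sgn \<tau> * \<epsilon>) * b powr (sgn \<tau> * \<epsilon>)"
        by (simp add: powr_add[symmetric] mult_ac)
      moreover have "b powr ((sgn \<tau> - sgn t) * \<epsilon>) = b powr (sgn \<tau> * \<epsilon>) / b powr (sgn t * \<epsilon>)"
        by (simp add: powr_diff[symmetric] left_diff_distrib)
      ultimately show ?thesis unfolding a_def[symmetric] b_def[symmetric] by simp
    qed
    finally show "norm (\<Psi> t \<tau> *v x) \<le> ?Ks * norm x" .
  qed
  let ?Ku = "C\<^sup>2 * (\<mu> \<tau> / \<mu> t) powr (- \<alpha> + sgn \<tau> * \<epsilon>) * \<mu> t powr (2 * sgn t * \<epsilon>)"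
  show "restr_norm (matrix_inv (\<Psi> t \<tau>)) (Gu t) \<le> ?Ku"
  proof (rule restr_norm_le[OF Gu_sub])
    show "0 \<le> ?Ku" by simp
    fix y assume y: "y \<in> Gu t"
    define x where "x = matrix_inv (\<Psi> t \<tau>) *v y"
    have Pxy: "\<Psi> t \<tau> *v x = y"
      unfolding x_def matrix_vector_mul_assoc using minv_props[OF Psinv[of t \<tau>]]
      by (simp add: matrix_vector_mul_lid)
    obtain x' where x': "x' \<in> Gu \<tau>" "y = \<Psi> t \<tau> *v x'" using Gu_inv[of t \<tau>] y by blast
    have "x = x'" using inj_matrix_vector_mult[OF Psinv[of t \<tau>]] Pxy x'(2)
      by (auto dest: injD)
    with x' have x: "x \<in> Gu \<tau>" by simp
    have Vpos: "V \<tau> x \<ge> 0"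
    proof -
      have "x \<in> E_u \<Psi> V \<tau>" using Gu_E x by blast
      then have "x \<in> (\<lambda>z. \<Psi> \<tau> \<tau> *v z) ` closure (cone_u (V \<tau>))" unfolding E_u_def by blast
      then have xc: "x \<in> closure (cone_u (V \<tau>))" by (simp add: Pid matrix_vector_mul_lid)
      have cV: "continuous_on UNIV (V \<tau>)"
      proof -
        have c: "continuous_on UNIV (\<lambda>p. V (fst p) (snd p))" using lyap unfolding lyapunov_function_def by blast
        have "continuous_on UNIV ((\<lambda>p. V (fst p) (snd p)) \<circ> (\<lambda>z. (\<tau>, z)))"
          by (rule continuous_on_compose[OF _ continuous_on_subset[OF c]]) (auto intro: continuous_intros)
        then show ?thesis by (simp add: o_def)
      qed
      have cl: "closed {z. V \<tau> z \<ge> 0}"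
        by (rule closed_Collect_le[OF continuous_on_const cV])
      have "cone_u (V \<tau>) \<subseteq> {z. V \<tau> z \<ge> 0}"
      proof
        fix z assume "z \<in> cone_u (V \<tau>)"
        then have "z = 0 \<or> V \<tau> z > 0" unfolding cone_u_def by auto
        moreover have "V \<tau> 0 \<ge> 0" using V_bound[of \<tau> 0] by simp
        ultimately show "z \<in> {z. V \<tau> z \<ge> 0}" by auto
      qed
      then have "closure (cone_u (V \<tau>)) \<subseteq> {z. V \<tau> z \<ge> 0}" using closure_minimal cl by blast
      then show ?thesis using xc by blast
    qed
    have c1: "V t y \<ge> (b / a) powr \<alpha> * V \<tau> x" using cond1[OF x tt] Pxy unfolding a_def b_def by simp
    have ba: "(b / a) powr \<alpha> > 0" using a0 b0 by simp
    have Vx: "\<bar>V \<tau> x\<bar> \<le> (b / a) powr (- \<alpha>) * \<bar>V t y\<bar>"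
    proof -
      have "V \<tau> x \<le> V t y / (b / a) powr \<alpha>" using c1 ba by (simp add: field_simps)
      moreover have "V t y \<ge> 0" using c1 ba Vpos by (smt (verit) mult_nonneg_nonneg)
      ultimately show ?thesis using Vpos by (simp add: powr_minus divide_inverse mult.commute)
    qed
    have "norm x \<le> C * b powr (sgn \<tau> * \<epsilon>) * \<bar>V \<tau> x\<bar>"
      using inv3[of x \<tau>] x unfolding b_def by blast
    also have "\<dots> \<le> C * b powr (sgn \<tau> * \<epsilon>) * ((b / a) powr (- \<alpha>) * \<bar>V t y\<bar>)"
      using Vx C_pos by (intro mult_left_mono) auto
    also have "\<dots> \<le> C * b powr (sgn \<tau> * \<epsilon>) * ((b / a) powr (- \<alpha>) * (C * a powr (sgn t * \<epsilon>) * norm y))"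
      using V_bound[of t y] C_pos unfolding a_def by (intro mult_left_mono) auto
    also have "\<dots> = (C\<^sup>2 * (b / a) powr (- \<alpha>) * b powr (sgn \<tau> * \<epsilon>) * a powr (sgn t * \<epsilon>)) * norm y"
      by (simp add: power2_eq_square algebra_simps)
    also have "\<dots> \<le> (C\<^sup>2 * (b / a) powr (- \<alpha>) * b powr (sgn \<tau> * \<epsilon>) * a powr (sgn t * \<epsilon>)
                     * a powr ((sgn t - sgn \<tau>) * \<epsilon>)) * norm y"
      using sgn_pow_ge1(2)[OF growth eps_nonneg tt] a0 b0 unfolding a_def[symmetric]
      by (intro mult_right_mono) (auto intro!: le_mult_one_aux)
    also have "\<dots> = ?Ku * norm y"
    proof -
      have "(b / a) powr (- \<alpha> + sgn \<tau> * \<epsilon>) = (b / a) powr (- \<alpha>) * b powr (sgn \<tau> * \<epsilon>) / a powr (sgn \<tau> * \<epsilon>)"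
        unfolding powr_add powr_divide using a0 b0 by simp
      moreover have "a powr (2 * sgn t * \<epsilon>) = a powr (sgn t * \<epsilon>) * a powr (sgn t * \<epsilon>)"
        by (simp add: powr_add[symmetric] mult_ac)
      moreover have "a powr ((sgn t - sgn \<tau>) * \<epsilon>) = a powr (sgn t * \<epsilon>) / a powr (sgn \<tau> * \<epsilon>)"
        by (simp add: powr_diff[symmetric] left_diff_distrib)
      ultimately show ?thesis unfolding a_def[symmetric] b_def[symmetric] by simp
    qed
    finally show "norm (matrix_inv (\<Psi> t \<tau>) *v y) \<le> ?Ku * norm y" unfolding x_def .
  qed
qed

end
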